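(* Let $\mathcal{D}$ be a fixed distribution supported on $[0,1]$ (not depending on $n,m$) with mean, variance, and largest median $\nu=\sup\{y:\Pr_{x\sim\mathcal{D}}(x\le y)\le\frac12\}$. Then for every $\epsilon>0$ there exists $n_0$ such that for all $n\ge n_0$ and all $m$, binomial voting is a $(\frac12-\epsilon)\nu$-expected-distortion-maximizing rule for $\mathcal{D}$. Furthermore, if $\mathcal{D}$ has a continuously differentiable CDF $F$ with $\inf_{x\in(0,1)}\frac{dF(x)}{dx}>0$, then for every $\epsilon>0$ there exists $m_0$ such that the same conclusion holds for all $m\ge m_0$ and all $n$.
   Context: There are $n$ voters and $m$ alternatives $A=\{1,\dots,m\}$. A preference profile $\sigma$ consists of a ranking of $A$ for each voter; position $1$ is the top. Given $\mathcal{D}$ and $\sigma$, a random utility profile $u$ consistent with $\sigma$ is generated as follows: independently for each voter $i$, draw $m$ i.i.d. samples from $\mathcal{D}$ and assign them, from highest to lowest, to the alternatives in the order of voter $i$'s ranking. The social welfare of $j$ is $\mathrm{sw}(j,u)=\sum_i u_{ij}$; expectations are over $u$. The distortion of $j$ at $\sigma$ is $\mathrm{dist}(j,\sigma)=\mathrm{sw}(j,u)/\max_{k\in A}\mathrm{sw}(k,u)$. A voting rule $f$ (mapping profiles to alternatives) is an $\alpha$-expected-distortion-maximizing rule for $\mathcal{D}$ if for every profile $\sigma$, $\mathbb{E}[\mathrm{dist}(f(\sigma),\sigma)]\ge\alpha\max_{j\in A}\mathbb{E}[\mathrm{dist}(j,\sigma)]$. Binomial voting is the scoring rule in which each voter gives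 $\sum_{\ell=k}^m\binom{m}{\ell}$ points to the alternative she ranks in position $k$; it selects an alternative with the largest total score (ties broken arbitrarily). *)

theory Defs
  imports "HOL-Probability.Probability"
begin

text \<open>Voters are 0..<n, alternatives are 0..<m, positions are 0..<m (0 = top).
  A profile sigma maps voter i and position k to the alternative voter i ranks at k.\<close>

definition is_profile :: "nat \<Rightarrow> nat \<Rightarrow> (nat \<Rightarrow> nat \<Rightarrow> nat) \<Rightarrow> bool" where
  "is_profile n m \<sigma> \<longleftrightarrow> (\<forall>i<n. bij_betw (\<sigma> i) {..<m} {..<m})"

definition rank_pos :: "nat \<Rightarrow> (nat \<Rightarrow> nat) \<Rightarrow> nat \<Rightarrow> nat" where
  "rank_pos m r j = (THE k. k < m \<and> r k = j)"

definition sample_space :: "real measure \<Rightarrow> nat \<Rightarrow> nat \<Rightarrow> (nat \<times> nat \<Rightarrow> real) measure" where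
  "sample_space D n m = PiM ({..<n} \<times> {..<m}) (\<lambda>_. D)"

definition desc_stat :: "nat \<Rightarrow> (nat \<times> nat \<Rightarrow> real) \<Rightarrow> nat \<Rightarrow> nat \<Rightarrow> real" where
  "desc_stat m \<omega> i k = rev (sort (map (\<lambda>l. \<omega> (i, l)) [0..<m])) ! k"

text \<open>Utility of voter i for alternative j: samples assigned from highest to lowest
  in the order of voter i's ranking.\<close>
definition utility :: "nat \<Rightarrow> (nat \<Rightarrow> nat \<Rightarrow> nat) \<Rightarrow> (nat \<times> nat \<Rightarrow> real) \<Rightarrow> nat \<Rightarrow> nat \<Rightarrow> real" where
  "utility m \<sigma> \<omega> i j = desc_stat m \<omega> i (rank_pos m (\<sigma> i) j)"

definition sw :: "nat \<Rightarrow> nat \<Rightarrow> (nat \<Rightarrow> nat \<Rightarrow> nat) \<Rightarrow> (nat \<times> nat \<Rightarrow> real) \<Rightarrow> nat \<Rightarrow> real" where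
  "sw n m \<sigma> \<omega> j = (\<Sum>i<n. utility m \<sigma> \<omega> i j)"

definition distortion :: "nat \<Rightarrow> nat \<Rightarrow> (nat \<Rightarrow> nat \<Rightarrow> nat) \<Rightarrow> (nat \<times> nat \<Rightarrow> real) \<Rightarrow> nat \<Rightarrow> real" where
  "distortion n m \<sigma> \<omega> j = sw n m \<sigma> \<omega> j / Max ((sw n m \<sigma> \<omega>) ` {..<m})"

definition expected_dist :: "real measure \<Rightarrow> nat \<Rightarrow> nat \<Rightarrow> (nat \<Rightarrow> nat \<Rightarrow> nat) \<Rightarrow> nat \<Rightarrow> real" where
  "expected_dist D n m \<sigma> j = (\<integral>\<omega>. distortion n m \<sigma> \<omega> j \<partial>(sample_space D n m))"

definition edm_rule :: "real measure \<Rightarrow> nat \<Rightarrow> nat \<Rightarrow> real \<Rightarrow> ((nat \<Rightarrow> nat \<Rightarrow> nat) \<Rightarrow> nat) \<Rightarrow> bool" where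
  "edm_rule D n m \<alpha> f \<longleftrightarrow>
     (\<forall>\<sigma>. is_profile n m \<sigma> \<longrightarrow>
        expected_dist D n m \<sigma> (f \<sigma>) \<ge> \<alpha> * Max ((expected_dist D n m \<sigma>) ` {..<m}))"

definition binom_points :: "nat \<Rightarrow> nat \<Rightarrow> nat" where
  "binom_points m k = (\<Sum>l\<in>{k+1..m}. m choose l)"

definition binom_score :: "nat \<Rightarrow> nat \<Rightarrow> (nat \<Rightarrow> nat \<Rightarrow> nat) \<Rightarrow> nat \<Rightarrow> nat" where
  "binom_score n m \<sigma> j = (\<Sum>i<n. binom_points m (rank_pos m (\<sigma> i) j))"

definition is_binomial_rule :: "nat \<Rightarrow> nat \<Rightarrow> ((nat \<Rightarrow> nat \<Rightarrow> nat) \<Rightarrow> nat) \<Rightarrow> bool" where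
  "is_binomial_rule n m f \<longleftrightarrow>
     (\<forall>\<sigma>. is_profile n m \<sigma> \<longrightarrow>
        f \<sigma> < m \<and> (\<forall>j<m. binom_score n m \<sigma> j \<le> binom_score n m \<sigma> (f \<sigma>)))"

definition largest_median :: "real measure \<Rightarrow> real" where
  "largest_median D = Sup {y. measure D {..y} \<le> 1/2}"

definition cdf_of :: "real measure \<Rightarrow> real \<Rightarrow> real" where
  "cdf_of D x = measure D {..x}"

end

theory Submission
  imports Defs
begin


lemma desc_upward:
  fixes xs :: "real list" and P :: "real \<Rightarrow> bool"
  assumes up: "\<And>x y. P x \<Longrightarrow> x \<le> y \<Longrightarrow> P y" and k: "k < length xs"
  shows "P (rev (sort xs) ! k) \<longleftrightarrow> k < length (filter P xs)"
proof -
  define ys where "ys = rev (sort xs)"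
  have len: "length ys = length xs" by (simp add: ys_def)
  have desc: "ys ! j \<le> ys ! i" if "i \<le> j" "j < length ys" for i j
  proof -
    have "sorted (sort xs)" by simp
    hence "sort xs ! (length xs - Suc j) \<le> sort xs ! (length xs - Suc i)"
      using that len by (intro sorted_nth_mono) auto
    thus ?thesis using that len by (simp add: ys_def rev_nth)
  qed
  have lf: "length (filter P xs) = length (filter P ys)"
  proof -
    have "filter P (sort xs) = sort (filter P xs)" by (rule filter_sort)
    thus ?thesis by (simp add: ys_def rev_filter[symmetric])
  qed
  have cc: "length (filter P ys) = card {i. i < length ys \<and> P (ys ! i)}"
    by (rule length_filter_conv_card)
  show ?thesis
  proof
    assume "P (rev (sort xs) ! k)"
    hence Pk: "P (ys ! k)" by (simp add: ys_def)
    have "{..k} \<subseteq> {i. i < length ys \<and> P (ys ! i)}"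
    proof
      fix j assume "j \<in> {..k}"
      hence j: "j \<le> k" by simp
      have "ys ! k \<le> ys ! j" using desc[OF j] k len by simp
      hence "P (ys ! j)" using up[OF Pk] by blast
      thus "j \<in> {i. i < length ys \<and> P (ys ! i)}" using j k len by simp
    qed
    hence "card {..k} \<le> card {i. i < length ys \<and> P (ys ! i)}"
      by (intro card_mono) auto
    thus "k < length (filter P xs)" using lf cc by simp
  next
    assume a: "k < length (filter P xs)"
    show "P (rev (sort xs) ! k)"
    proof (rule ccontr)
      assume "\<not> P (rev (sort xs) ! k)"
      hence nP: "\<not> P (ys ! k)" by (simp add: ys_def)
      have "{i. i < length ys \<and> P (ys ! i)} \<subseteq> {..<k}"
      proof
        fix i assume "i \<in> {i. i < length ys \<and> P (ys ! i)}"
        hence i: "i < length ys" "P (ys ! i)" by auto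
        show "i \<in> {..<k}"
        proof (rule ccontr)
          assume "i \<notin> {..<k}"
          hence "k \<le> i" by simp
          hence "ys ! i \<le> ys ! k" using desc i by blast
          hence "P (ys ! k)" using up i by blast
          thus False using nP by simp
        qed
      qed
      hence "card {i. i < length ys \<and> P (ys ! i)} \<le> card {..<k}"
        by (intro card_mono) auto
      thus False using a lf cc by simp
    qed
  qed
qed

lemma desc_stat_iff:
  assumes up: "\<And>x y. P x \<Longrightarrow> x \<le> y \<Longrightarrow> P y" and k: "k < m"
  shows "P (desc_stat m \<omega> i k) \<longleftrightarrow> k < card {l. l < m \<and> P (\<omega> (i,l))}"
proof -
  have "P (desc_stat m \<omega> i k) \<longleftrightarrow> k < length (filter P (map (\<lambda>l. \<omega> (i, l)) [0..<m]))"
    unfolding desc_stat_def using k desc_upward[where P=P, OF up] by simp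
  also have "length (filter P (map (\<lambda>l. \<omega> (i, l)) [0..<m])) = card {l. l < m \<and> P (\<omega> (i,l))}"
    by (simp add: length_filter_conv_card cong: conj_cong)
  finally show ?thesis .
qed

lemma desc_stat_in:
  assumes "k < m"
  shows "desc_stat m \<omega> i k \<in> (\<lambda>l. \<omega> (i,l)) ` {..<m}"
proof -
  have "desc_stat m \<omega> i k \<in> set (rev (sort (map (\<lambda>l. \<omega> (i, l)) [0..<m])))"
    unfolding desc_stat_def using assms by (intro nth_mem) simp
  thus ?thesis by auto
qed

lemma desc_stat_meas:
  assumes "k < m" "i < n" and sD: "sets D = sets borel"
  shows "(\<lambda>\<omega>. desc_stat m \<omega> i k) \<in> borel_measurable (sample_space D n m)"
proof (subst borel_measurable_iff_greater, intro allI)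
  fix a :: real
  let ?S = "sample_space D n m"
  define AA where "AA = {A \<in> Pow {..<m}. k < card A}"
  have fin: "finite AA" unfolding AA_def by simp
  have eq: "{w \<in> space ?S. a < desc_stat m w i k} = {w \<in> space ?S. \<exists>A\<in>AA. \<forall>l\<in>A. a < w (i,l)}"
  proof -
    have "a < desc_stat m w i k \<longleftrightarrow> (\<exists>A\<in>AA. \<forall>l\<in>A. a < w (i,l))" for w
    proof -
      have "a < desc_stat m w i k \<longleftrightarrow> k < card {l. l < m \<and> a < w (i,l)}"
        using assms by (intro desc_stat_iff) auto
      also have "\<dots> \<longleftrightarrow> (\<exists>A\<in>AA. \<forall>l\<in>A. a < w (i,l))"
      proof
        assume "k < card {l. l < m \<and> a < w (i,l)}"
        thus "\<exists>A\<in>AA. \<forall>l\<in>A. a < w (i,l)" unfolding AA_def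
          by (intro bexI[of _ "{l. l < m \<and> a < w (i,l)}"]) auto
      next
        assume "\<exists>A\<in>AA. \<forall>l\<in>A. a < w (i,l)"
        then obtain A where A: "A \<subseteq> {..<m}" "k < card A" "\<forall>l\<in>A. a < w (i,l)"
          unfolding AA_def by auto
        have "card A \<le> card {l. l < m \<and> a < w (i,l)}"
          using A by (intro card_mono) auto
        thus "k < card {l. l < m \<and> a < w (i,l)}" using A by simp
      qed
      finally show ?thesis .
    qed
    thus ?thesis by simp
  qed
  have AAsub: "\<And>A l. A \<in> AA \<Longrightarrow> l \<in> A \<Longrightarrow> (i,l) \<in> {..<n} \<times> {..<m}"
    using assms unfolding AA_def by auto
  have "{w \<in> space ?S. \<exists>A\<in>AA. \<forall>l\<in>A. a < w (i,l)} \<in> sets ?S"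
    unfolding sample_space_def
    using fin AAsub
  proof (intro sets.sets_Collect_finite_Ex sets.sets_Collect_finite_All ballI)
    fix A l assume "A \<in> AA" "l \<in> A"
    hence il: "(i,l) \<in> {..<n} \<times> {..<m}" using AAsub by blast
    have mm: "(\<lambda>w. w (i,l)) \<in> measurable (PiM ({..<n} \<times> {..<m}) (\<lambda>_. D)) D"
      using il by (rule measurable_component_singleton)
    have "{a<..} \<in> sets D" using sD by simp
    from measurable_sets[OF mm this]
    show "{w \<in> space (PiM ({..<n} \<times> {..<m}) (\<lambda>_. D)). a < w (i,l)} \<in> sets (PiM ({..<n} \<times> {..<m}) (\<lambda>_. D))"
      by (simp add: vimage_def Int_def conj_commute)
  qed (use fin in \<open>auto simp: AA_def intro: finite_subset\<close>)
  with eq show "{w \<in> space ?S. a < desc_stat m w i k} \<in> sets ?S" by simp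
qed



definition Hs :: "real \<Rightarrow> nat set \<Rightarrow> nat \<Rightarrow> real" where
  "Hs p M r = (\<Sum>A\<in>Pow M. if r \<le> card A then (\<Prod>l\<in>M. if l \<in> A then p else 1 - p) else 0)"

lemma Hs_empty: "Hs p {} r = (if r = 0 then 1 else 0)"
  by (simp add: Hs_def)

lemma Hs_nonneg: "0 \<le> p \<Longrightarrow> p \<le> 1 \<Longrightarrow> 0 \<le> Hs p M r"
  unfolding Hs_def by (intro sum_nonneg) (auto intro!: prod_nonneg)

lemma Hs_mono: assumes "0 \<le> p" "p \<le> 1" "r' \<le> r" shows "Hs p M r \<le> Hs p M r'"
  unfolding Hs_def using assms by (intro sum_mono) (auto intro!: prod_nonneg)

lemma Hs_insert:
  assumes fin: "finite M" and x: "x \<notin> M"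
  shows "Hs p (insert x M) r = (1 - p) * Hs p M r + p * Hs p M (r - 1)"
proof -
  let ?w = "\<lambda>N A. (\<Prod>l\<in>N. if l \<in> A then p else 1 - p)"
  let ?g = "\<lambda>A. if r \<le> card A then ?w (insert x M) A else 0"
  have disj: "Pow M \<inter> insert x ` Pow M = {}" using x by auto
  have inj: "inj_on (insert x) (Pow M)" using x by (auto simp: inj_on_def)
  have "Hs p (insert x M) r = sum ?g (Pow M) + sum ?g (insert x ` Pow M)"
    unfolding Hs_def Pow_insert using fin disj by (intro sum.union_disjoint) auto
  also have "sum ?g (insert x ` Pow M) = sum (?g \<circ> insert x) (Pow M)"
    using inj by (rule sum.reindex)
  also have "sum ?g (Pow M) = (1 - p) * Hs p M r"
    unfolding Hs_def sum_distrib_left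
  proof (intro sum.cong refl)
    fix A assume A: "A \<in> Pow M"
    have "?w (insert x M) A = (1 - p) * ?w M A"
      using A x fin by (subst prod.insert) auto
    thus "?g A = (1 - p) * (if r \<le> card A then ?w M A else 0)" by simp
  qed
  also have "sum (?g \<circ> insert x) (Pow M) = p * Hs p M (r - 1)"
    unfolding Hs_def sum_distrib_left
  proof (intro sum.cong refl)
    fix A assume A: "A \<in> Pow M"
    have finA: "finite A" using A fin by (auto intro: finite_subset)
    have xA: "x \<notin> A" using A x by auto
    have "?w (insert x M) (insert x A) = p * ?w M (insert x A)"
      using A x fin by (subst prod.insert) auto
    also have "?w M (insert x A) = ?w M A"
      using x by (intro prod.cong refl) auto
    finally have 1: "?w (insert x M) (insert x A) = p * ?w M A" .
    have 2: "card (insert x A) = Suc (card A)" using finA xA by simp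
    have 3: "(r \<le> Suc (card A)) = (r - 1 \<le> card A)" by arith
    show "(?g \<circ> insert x) A = p * (if r - 1 \<le> card A then ?w M A else 0)"
      using 1 2 3 by simp
  qed
  finally show ?thesis .
qed

lemma Hs_half: "finite M \<Longrightarrow> Hs (1/2) M r = real (card {A \<in> Pow M. r \<le> card A}) / 2 ^ card M"
proof -
  assume fin: "finite M"
  have "Hs (1/2) M r = (\<Sum>A\<in>Pow M. if r \<le> card A then (1/2::real) ^ card M else 0)"
  proof -
    have h: "(\<Prod>l\<in>M. if l \<in> A then (1/2::real) else 1 - 1/2) = (1/2) ^ card M" for A
    proof -
      have "(\<Prod>l\<in>M. if l \<in> A then (1/2::real) else 1 - 1/2) = (\<Prod>l\<in>M. (1/2::real))"
        by (rule prod.cong) auto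
      thus ?thesis by simp
    qed
    show ?thesis unfolding Hs_def h by simp
  qed
  also have "\<dots> = (\<Sum>A\<in>{A \<in> Pow M. r \<le> card A}. (1/2::real) ^ card M)"
    using fin by (subst sum.inter_filter) auto
  also have "\<dots> = real (card {A \<in> Pow M. r \<le> card A}) / 2 ^ card M"
    by (simp add: power_one_over)
  finally show ?thesis .
qed

lemma Hs_dom:
  assumes "finite M" "1/2 \<le> p" "p \<le> 1"
  shows "Hs (1/2) M r \<le> Hs p M r"
  using assms(1)
proof (induction M arbitrary: r rule: finite_induct)
  case empty
  then show ?case by (simp add: Hs_empty)
next
  case (insert x M)
  define a where "a = Hs (1/2) M r"
  define b where "b = Hs (1/2) M (r - 1)"
  have ab: "a \<le> b" unfolding a_def b_def by (intro Hs_mono) auto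
  have "Hs (1/2) (insert x M) r = (1/2) * a + (1/2) * b"
    unfolding a_def b_def using insert by (simp add: Hs_insert)
  also have "\<dots> \<le> (1 - p) * a + p * b"
  proof -
    have "0 \<le> (p - 1/2) * (b - a)" using ab assms by simp
    moreover have "(1 - p) * a + p * b - ((1/2)*a + (1/2)*b) = (p - 1/2)*(b - a)" by (simp add: field_simps)
    ultimately show ?thesis by linarith
  qed
  also have "\<dots> \<le> (1 - p) * Hs p M r + p * Hs p M (r - 1)"
    unfolding a_def b_def using insert.IH assms
    by (intro add_mono mult_left_mono) auto
  also have "\<dots> = Hs p (insert x M) r" using insert by (simp add: Hs_insert)
  finally show ?case .
qed

lemma binom_points_card:
  "binom_points m k = card {A \<in> Pow {..<m}. Suc k \<le> card A}"
proof -
  have eq: "{A \<in> Pow {..<m}. Suc k \<le> card A} = (\<Union>l\<in>{k+1..m}. {A. A \<subseteq> {..<m} \<and> card A = l})"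
  proof (intro set_eqI iffI)
    fix A assume "A \<in> {A \<in> Pow {..<m}. Suc k \<le> card A}"
    moreover hence "card A \<le> m" using card_mono[of "{..<m}" A] by auto
    ultimately show "A \<in> (\<Union>l\<in>{k+1..m}. {A. A \<subseteq> {..<m} \<and> card A = l})" by auto
  qed auto
  have "card {A \<in> Pow {..<m}. Suc k \<le> card A} = (\<Sum>l\<in>{k+1..m}. card {A. A \<subseteq> {..<m} \<and> card A = l})"
    unfolding eq by (intro card_UN_disjoint) (auto intro: finite_subset)
  also have "\<dots> = (\<Sum>l\<in>{k+1..m}. m choose l)"
    by (intro sum.cong refl) (simp add: n_subsets)
  finally show ?thesis by (simp add: binom_points_def)
qed

lemma tri_sum: "(\<Sum>k<N. \<Sum>l\<in>{Suc k..N}. c l) = (\<Sum>l\<le>N. l * c l :: nat)"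
proof (induction N)
  case 0 then show ?case by simp
next
  case (Suc N)
  have "(\<Sum>k<Suc N. \<Sum>l\<in>{Suc k..Suc N}. c l) = (\<Sum>k<Suc N. (\<Sum>l\<in>{Suc k..N}. c l) + c (Suc N))"
    by (intro sum.cong refl) (simp add: sum.atLeast_Suc_atMost_Suc_shift)
  also have "\<dots> = (\<Sum>k<Suc N. \<Sum>l\<in>{Suc k..N}. c l) + Suc N * c (Suc N)"
    by (simp add: sum.distrib)
  also have "(\<Sum>k<Suc N. \<Sum>l\<in>{Suc k..N}. c l) = (\<Sum>k<N. \<Sum>l\<in>{Suc k..N}. c l)"
    by simp
  finally show ?case using Suc by simp
qed

lemma sum_binom_points: "(\<Sum>k<m. binom_points m k) = m * 2 ^ (m - 1)"
proof -
  have "(\<Sum>k<m. binom_points m k) = (\<Sum>k<m. \<Sum>l\<in>{Suc k..m}. m choose l)"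
    by (simp add: binom_points_def)
  also have "\<dots> = (\<Sum>l\<le>m. l * (m choose l))" by (rule tri_sum)
  also have "\<dots> = m * 2 ^ (m - 1)" by (rule choose_linear_sum)
  finally show ?thesis .
qed



definition Fev :: "real measure \<Rightarrow> nat \<Rightarrow> nat \<Rightarrow> real \<Rightarrow> nat \<Rightarrow> nat set \<Rightarrow> (nat \<times> nat \<Rightarrow> real) set" where
  "Fev D n m t i A = prod_emb ({..<n} \<times> {..<m}) (\<lambda>_. D) ({i} \<times> {..<m})
      (PiE ({i} \<times> {..<m}) (\<lambda>j. if snd j \<in> A then {t<..} else {..t}))"

lemma Fev_iff:
  "\<omega> \<in> Fev D n m t i A \<longleftrightarrow> \<omega> \<in> space (sample_space D n m) \<and> (\<forall>l<m. (t < \<omega> (i,l)) = (l \<in> A))"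
proof -
  have "\<omega> \<in> Fev D n m t i A \<longleftrightarrow> \<omega> \<in> space (sample_space D n m) \<and>
     restrict \<omega> ({i} \<times> {..<m}) \<in> PiE ({i} \<times> {..<m}) (\<lambda>j. if snd j \<in> A then {t<..} else {..t})"
    unfolding Fev_def prod_emb_iff sample_space_def space_PiM PiE_iff by auto
  also have "restrict \<omega> ({i} \<times> {..<m}) \<in> PiE ({i} \<times> {..<m}) (\<lambda>j. if snd j \<in> A then {t<..} else {..t})
      \<longleftrightarrow> (\<forall>l<m. (t < \<omega> (i,l)) = (l \<in> A))"
    by (auto simp: PiE_iff split: if_splits; meson lessThan_iff not_le)
  finally show ?thesis .
qed

lemma Fev_sets:
  assumes "i < n" "sets D = sets borel"
  shows "Fev D n m t i A \<in> sets (sample_space D n m)"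
  unfolding Fev_def sample_space_def
  using assms by (intro sets_PiM_I) auto

lemma Fev_measure:
  assumes D: "prob_space D" "sets D = sets borel" and i: "i < n"
  shows "measure (sample_space D n m) (Fev D n m t i A) =
           (\<Prod>l<m. if l \<in> A then measure D {t<..} else 1 - measure D {t<..})"
proof -
  interpret D: prob_space D by (rule D(1))
  let ?B = "\<lambda>j::nat\<times>nat. if snd j \<in> A then {t<..} else {..t::real}"
  have spD: "space D = UNIV" using sets_eq_imp_space_eq[OF D(2)] by simp
  have cmp: "measure D {..t} = 1 - measure D {t<..}"
  proof -
    have "measure D (space D - {t<..}) = 1 - measure D {t<..}"
      using D(2) by (intro D.prob_compl) auto
    moreover have "space D - {t<..} = {..t}" using spD by auto
    ultimately show ?thesis by simp
  qed
  have "emeasure (sample_space D n m) (Fev D n m t i A) = (\<Prod>j\<in>{i} \<times> {..<m}. emeasure D (?B j))"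
    unfolding Fev_def sample_space_def
    using D i by (intro emeasure_PiM_emb) auto
  also have "\<dots> = (\<Prod>j\<in>{i} \<times> {..<m}. ennreal (measure D (?B j)))"
    by (intro prod.cong refl) (simp add: D.emeasure_eq_measure)
  also have "\<dots> = ennreal (\<Prod>j\<in>{i} \<times> {..<m}. measure D (?B j))"
    by (rule prod_ennreal) simp
  finally have e: "measure (sample_space D n m) (Fev D n m t i A) = (\<Prod>j\<in>{i} \<times> {..<m}. measure D (?B j))"
    by (simp add: measure_def prod_nonneg)
  have "{i} \<times> {..<m} = Pair i ` {..<m}" by auto
  hence "(\<Prod>j\<in>{i} \<times> {..<m}. measure D (?B j)) = (\<Prod>l<m. measure D (?B (i,l)))"
    by (simp add: prod.reindex inj_on_def)
  also have "\<dots> = (\<Prod>l<m. if l \<in> A then measure D {t<..} else 1 - measure D {t<..})"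
    by (intro prod.cong refl) (simp add: cmp)
  finally show ?thesis using e by simp
qed

lemma Fev_indicator_sum:
  assumes "\<omega> \<in> space (sample_space D n m)"
  shows "(\<Sum>A\<in>{A \<in> Pow {..<m}. Suc k \<le> card A}. indicator (Fev D n m t i A) \<omega> :: real)
     = (if Suc k \<le> card {l. l < m \<and> t < \<omega> (i,l)} then 1 else 0)"
proof -
  define C where "C = {l. l < m \<and> t < \<omega> (i,l)}"
  have "indicator (Fev D n m t i A) \<omega> = (if A = C then 1 else (0::real))" if "A \<in> Pow {..<m}" for A
  proof -
    have "(\<forall>l<m. (t < \<omega> (i,l)) = (l \<in> A)) \<longleftrightarrow> A = C"
      using that unfolding C_def by auto
    thus ?thesis using assms by (simp add: indicator_def Fev_iff)
  qed
  hence "(\<Sum>A\<in>{A \<in> Pow {..<m}. Suc k \<le> card A}. indicator (Fev D n m t i A) \<omega> :: real)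
     = (\<Sum>A\<in>{A \<in> Pow {..<m}. Suc k \<le> card A}. if A = C then 1 else 0)"
    by (intro sum.cong refl) auto
  also have "\<dots> = (if C \<in> {A \<in> Pow {..<m}. Suc k \<le> card A} then 1 else 0)"
    by (rule sum.delta) simp
  also have "\<dots> = (if Suc k \<le> card C then 1 else 0)" unfolding C_def by auto
  finally show ?thesis unfolding C_def .
qed

lemma Fev_integral:
  assumes D: "prob_space D" "sets D = sets borel" and i: "i < n"
  shows "(\<integral>\<omega>. (\<Sum>A\<in>{A \<in> Pow {..<m}. Suc k \<le> card A}. indicator (Fev D n m t i A) \<omega> :: real) \<partial>sample_space D n m)
     = Hs (measure D {t<..}) {..<m} (Suc k)"
proof -
  interpret S: prob_space "sample_space D n m"
    unfolding sample_space_def using D by (intro prob_space_PiM) auto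
  have "(\<integral>\<omega>. (\<Sum>A\<in>{A \<in> Pow {..<m}. Suc k \<le> card A}. indicator (Fev D n m t i A) \<omega> :: real) \<partial>sample_space D n m)
     = (\<Sum>A\<in>{A \<in> Pow {..<m}. Suc k \<le> card A}. measure (sample_space D n m) (Fev D n m t i A))"
  proof -
    have "(\<integral>\<omega>. (\<Sum>A\<in>{A \<in> Pow {..<m}. Suc k \<le> card A}. indicator (Fev D n m t i A) \<omega> :: real) \<partial>sample_space D n m)
       = (\<Sum>A\<in>{A \<in> Pow {..<m}. Suc k \<le> card A}. (\<integral>\<omega>. indicator (Fev D n m t i A) \<omega> \<partial>sample_space D n m))"
      by (rule Bochner_Integration.integral_sum) (use Fev_sets[OF i D(2)] in \<open>auto intro!: integrable_real_indicator simp: S.emeasure_eq_measure\<close>)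
    also have "\<dots> = (\<Sum>A\<in>{A \<in> Pow {..<m}. Suc k \<le> card A}. measure (sample_space D n m) (Fev D n m t i A))"
      using Fev_sets[OF i D(2)] by (intro sum.cong refl) (simp add: Int_absorb2 sets.sets_into_space)
    finally show ?thesis .
  qed
  also have "\<dots> = Hs (measure D {t<..}) {..<m} (Suc k)"
    unfolding Hs_def using Fev_measure[OF D i]
    by (subst sum.inter_filter[symmetric]) auto
  finally show ?thesis .
qed



lemma rank_pos_props:
  assumes b: "bij_betw r {..<m} {..<m}" and j: "j < m"
  shows "rank_pos m r j < m \<and> r (rank_pos m r j) = j"
proof -
  have "j \<in> r ` {..<m}" using bij_betw_imp_surj_on[OF b] j by simp
  then obtain k where k: "k < m" "r k = j" by auto
  have inj: "inj_on r {..<m}" using b by (rule bij_betw_imp_inj_on)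
  have u: "\<And>k'. k' < m \<and> r k' = j \<Longrightarrow> k' = k"
    using inj_onD[OF inj] k by (metis lessThan_iff)
  have "rank_pos m r j = k" unfolding rank_pos_def
    by (rule the_equality) (use k u in blast)+
  thus ?thesis using k by simp
qed

lemma rank_pos_inv:
  assumes b: "bij_betw r {..<m} {..<m}" and k: "k < m"
  shows "rank_pos m r (r k) = k"
  unfolding rank_pos_def
proof (rule the_equality)
  show "k < m \<and> r k = r k" using k by simp
next
  fix k' assume "k' < m \<and> r k' = r k"
  moreover have inj: "inj_on r {..<m}" using b by (rule bij_betw_imp_inj_on)
  ultimately show "k' = k" using inj_onD[OF inj] k by (metis lessThan_iff)
qed

lemma utility_bounds:
  assumes vals: "\<forall>s\<in>{..<n} \<times> {..<m}. \<omega> s \<in> {0..1}" and prof: "is_profile n m \<sigma>"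
    and i: "i < n" and j: "j < m"
  shows "0 \<le> utility m \<sigma> \<omega> i j \<and> utility m \<sigma> \<omega> i j \<le> 1"
proof -
  have r: "rank_pos m (\<sigma> i) j < m" using rank_pos_props prof i j unfolding is_profile_def by blast
  from desc_stat_in[OF r, of \<omega> i] obtain l where "l < m" "desc_stat m \<omega> i (rank_pos m (\<sigma> i) j) = \<omega> (i,l)"
    by auto
  thus ?thesis using vals i unfolding utility_def by auto
qed

lemma sw_bounds:
  assumes vals: "\<forall>s\<in>{..<n} \<times> {..<m}. \<omega> s \<in> {0..1}" and prof: "is_profile n m \<sigma>" and j: "j < m"
  shows "0 \<le> sw n m \<sigma> \<omega> j \<and> sw n m \<sigma> \<omega> j \<le> real n"
proof -
  have "0 \<le> sw n m \<sigma> \<omega> j" unfolding sw_def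
    using utility_bounds[OF vals prof _ j] by (intro sum_nonneg) auto
  moreover have "sw n m \<sigma> \<omega> j \<le> (\<Sum>i<n. 1)" unfolding sw_def
    using utility_bounds[OF vals prof _ j] by (intro sum_mono) auto
  ultimately show ?thesis by simp
qed

lemma max_sw_bounds:
  assumes vals: "\<forall>s\<in>{..<n} \<times> {..<m}. \<omega> s \<in> {0..1}" and prof: "is_profile n m \<sigma>" and j: "j < m"
  shows "sw n m \<sigma> \<omega> j \<le> Max (sw n m \<sigma> \<omega> ` {..<m}) \<and> Max (sw n m \<sigma> \<omega> ` {..<m}) \<le> real n"
proof
  show "sw n m \<sigma> \<omega> j \<le> Max (sw n m \<sigma> \<omega> ` {..<m})" using j by (intro Max_ge) auto
  show "Max (sw n m \<sigma> \<omega> ` {..<m}) \<le> real n"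
    using j sw_bounds[OF vals prof] by (subst Max_le_iff) auto
qed

lemma dist_bounds:
  assumes vals: "\<forall>s\<in>{..<n} \<times> {..<m}. \<omega> s \<in> {0..1}" and prof: "is_profile n m \<sigma>" and j: "j < m"
  shows "0 \<le> distortion n m \<sigma> \<omega> j \<and> distortion n m \<sigma> \<omega> j \<le> 1"
proof -
  let ?s = "sw n m \<sigma> \<omega> j" and ?M = "Max (sw n m \<sigma> \<omega> ` {..<m})"
  have a: "0 \<le> ?s" "?s \<le> ?M" using sw_bounds[OF vals prof j] max_sw_bounds[OF vals prof j] by auto
  show ?thesis unfolding distortion_def
  proof (cases "?M = 0")
    case True then show "0 \<le> ?s / ?M \<and> ?s / ?M \<le> 1" by simp
  next
    case False
    hence "0 < ?M" using a by simp
    then show "0 \<le> ?s / ?M \<and> ?s / ?M \<le> 1" using a by simp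
  qed
qed

lemma utility_lower:
  assumes vals: "\<forall>s\<in>{..<n} \<times> {..<m}. \<omega> s \<in> {0..1}" and prof: "is_profile n m \<sigma>"
    and i: "i < n" and j: "j < m" and t: "0 \<le> t"
  shows "t * (if Suc (rank_pos m (\<sigma> i) j) \<le> card {l. l < m \<and> t < \<omega> (i,l)} then 1 else 0) \<le> utility m \<sigma> \<omega> i j"
proof -
  have r: "rank_pos m (\<sigma> i) j < m" using rank_pos_props prof i j unfolding is_profile_def by blast
  have iff: "t < desc_stat m \<omega> i (rank_pos m (\<sigma> i) j) \<longleftrightarrow> rank_pos m (\<sigma> i) j < card {l. l < m \<and> t < \<omega> (i,l)}"
    by (rule desc_stat_iff[OF _ r]) auto
  show ?thesis using iff utility_bounds[OF vals prof i j] unfolding utility_def by auto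
qed

lemma pointwise:
  assumes vals: "\<forall>s\<in>{..<n} \<times> {..<m}. \<omega> s \<in> {0..1}" and prof: "is_profile n m \<sigma>"
    and j: "j < m" and t: "0 \<le> t" and n: "1 \<le> n"
  shows "t / real n * (\<Sum>i<n. (if Suc (rank_pos m (\<sigma> i) j) \<le> card {l. l < m \<and> t < \<omega> (i,l)} then 1 else 0))
     \<le> distortion n m \<sigma> \<omega> j"
proof -
  let ?s = "sw n m \<sigma> \<omega> j" and ?M = "Max (sw n m \<sigma> \<omega> ` {..<m})"
  let ?I = "\<Sum>i<n. (if Suc (rank_pos m (\<sigma> i) j) \<le> card {l. l < m \<and> t < \<omega> (i,l)} then 1 else 0::real)"
  have a: "0 \<le> ?s" "?s \<le> ?M" "?M \<le> real n" using sw_bounds[OF vals prof j] max_sw_bounds[OF vals prof j] by auto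
  have low: "t * ?I \<le> ?s" unfolding sw_def sum_distrib_left
    using utility_lower[OF vals prof _ j t] by (intro sum_mono) auto
  have "t / real n * ?I = t * ?I / real n" by simp
  also have "\<dots> \<le> ?s / real n" using low n by (intro divide_right_mono) auto
  also have "\<dots> \<le> distortion n m \<sigma> \<omega> j"
  proof (cases "?M = 0")
    case True
    thus ?thesis using a by (simp add: distortion_def)
  next
    case False
    hence "0 < ?M" using a by simp
    thus ?thesis unfolding distortion_def using a by (intro divide_left_mono) auto
  qed
  finally show ?thesis .
qed



lemma util_meas:
  assumes sD: "sets D = sets borel" and prof: "is_profile n m \<sigma>" and i: "i < n" and j: "j < m"
  shows "(\<lambda>\<omega>. utility m \<sigma> \<omega> i j) \<in> borel_measurable (sample_space D n m)"
proof -
  have r: "rank_pos m (\<sigma> i) j < m" using rank_pos_props prof i j unfolding is_profile_def by blast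
  show ?thesis unfolding utility_def by (rule desc_stat_meas[OF r i sD])
qed

lemma sw_meas:
  assumes sD: "sets D = sets borel" and prof: "is_profile n m \<sigma>" and j: "j < m"
  shows "(\<lambda>\<omega>. sw n m \<sigma> \<omega> j) \<in> borel_measurable (sample_space D n m)"
  unfolding sw_def by (intro borel_measurable_sum util_meas[OF sD prof _ j]) simp

lemma dist_meas:
  assumes sD: "sets D = sets borel" and prof: "is_profile n m \<sigma>" and j: "j < m"
  shows "(\<lambda>\<omega>. distortion n m \<sigma> \<omega> j) \<in> borel_measurable (sample_space D n m)"
proof -
  have "(\<lambda>\<omega>. Max ((\<lambda>j. sw n m \<sigma> \<omega> j) ` {..<m})) \<in> borel_measurable (sample_space D n m)"
    by (intro borel_measurable_Max sw_meas[OF sD prof]) auto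
  thus ?thesis unfolding distortion_def
    by (intro borel_measurable_divide sw_meas[OF sD prof j]) simp
qed

lemma AE_vals:
  assumes D: "prob_space D" "sets D = sets borel" "measure D {0..1} = 1"
  shows "AE \<omega> in sample_space D n m. \<forall>s\<in>{..<n} \<times> {..<m}. \<omega> s \<in> {0..1}"
proof (rule AE_finite_allI)
  interpret D: prob_space D by (rule D(1))
  have a: "AE x in D. x \<in> {0..1}" using D by (intro D.AE_prob_1) simp
  fix s assume "s \<in> {..<n} \<times> {..<m}"
  thus "AE \<omega> in sample_space D n m. \<omega> s \<in> {0..1}"
    unfolding sample_space_def using D(1) a by (intro AE_PiM_component) auto
qed simp

lemma S_prob:
  assumes "prob_space D" shows "prob_space (sample_space D n m)"
  unfolding sample_space_def using assms by (intro prob_space_PiM) auto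

lemma ed_bounds:
  assumes D: "prob_space D" "sets D = sets borel" "measure D {0..1} = 1"
    and prof: "is_profile n m \<sigma>" and j: "j < m"
  shows "0 \<le> expected_dist D n m \<sigma> j \<and> expected_dist D n m \<sigma> j \<le> 1"
proof -
  interpret S: prob_space "sample_space D n m" by (rule S_prob[OF D(1)])
  have ae: "AE \<omega> in sample_space D n m. 0 \<le> distortion n m \<sigma> \<omega> j \<and> distortion n m \<sigma> \<omega> j \<le> 1"
    using AE_vals[OF D] by eventually_elim (use dist_bounds[OF _ prof j] in blast)
  have int: "integrable (sample_space D n m) (\<lambda>\<omega>. distortion n m \<sigma> \<omega> j)"
    by (rule S.integrable_const_bound[where B=1]) (use ae dist_meas[OF D(2) prof j] in auto)
  have "0 \<le> expected_dist D n m \<sigma> j" unfolding expected_dist_def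
    by (rule integral_nonneg_AE) (use ae in auto)
  moreover have "expected_dist D n m \<sigma> j \<le> (\<integral>\<omega>. 1 \<partial>sample_space D n m)" unfolding expected_dist_def
    by (rule integral_mono_AE) (use ae int in auto)
  ultimately show ?thesis using S.prob_space by simp
qed

lemma score_sum:
  assumes prof: "is_profile n m \<sigma>"
  shows "(\<Sum>j<m. binom_score n m \<sigma> j) = n * (m * 2 ^ (m - 1))"
proof -
  have "(\<Sum>j<m. binom_score n m \<sigma> j) = (\<Sum>i<n. \<Sum>j<m. binom_points m (rank_pos m (\<sigma> i) j))"
    unfolding binom_score_def by (rule sum.swap)
  also have "\<dots> = (\<Sum>i<n. m * 2 ^ (m - 1))"
  proof (intro sum.cong refl)
    fix i assume "i \<in> {..<n}"
    hence b: "bij_betw (\<sigma> i) {..<m} {..<m}" using prof unfolding is_profile_def by simp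
    have "(\<Sum>j<m. binom_points m (rank_pos m (\<sigma> i) j)) = (\<Sum>k<m. binom_points m (rank_pos m (\<sigma> i) (\<sigma> i k)))"
      by (rule sum.reindex_bij_betw[OF b, symmetric])
    also have "\<dots> = (\<Sum>k<m. binom_points m k)"
      by (intro sum.cong refl) (simp add: rank_pos_inv[OF b])
    also have "\<dots> = m * 2 ^ (m - 1)" by (rule sum_binom_points)
    finally show "(\<Sum>j<m. binom_points m (rank_pos m (\<sigma> i) j)) = m * 2 ^ (m - 1)" .
  qed
  finally show ?thesis by simp
qed

lemma score_lower:
  assumes f: "is_binomial_rule n m f" and prof: "is_profile n m \<sigma>" and m: "1 \<le> m"
  shows "n * 2 ^ (m - 1) \<le> binom_score n m \<sigma> (f \<sigma>)"
proof -
  have fb: "\<forall>j<m. binom_score n m \<sigma> j \<le> binom_score n m \<sigma> (f \<sigma>)"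
    using f prof unfolding is_binomial_rule_def by blast
  have "m * (n * 2 ^ (m - 1)) = (\<Sum>j<m. binom_score n m \<sigma> j)" using score_sum[OF prof] by simp
  also have "\<dots> \<le> (\<Sum>j<m. binom_score n m \<sigma> (f \<sigma>))" using fb by (intro sum_mono) auto
  also have "\<dots> = m * binom_score n m \<sigma> (f \<sigma>)" by simp
  finally show ?thesis using m by simp
qed



lemma main_bound:
  assumes D: "prob_space D" "sets D = sets borel" "measure D {0..1} = 1"
    and t: "0 \<le> t" "measure D {..t} \<le> 1/2"
    and n: "1 \<le> n" and m: "1 \<le> m"
    and f: "is_binomial_rule n m f" and prof: "is_profile n m \<sigma>"
  shows "t / 2 \<le> expected_dist D n m \<sigma> (f \<sigma>)"
proof -
  interpret D: prob_space D by (rule D(1))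
  interpret S: prob_space "sample_space D n m" by (rule S_prob[OF D(1)])
  define j where "j = f \<sigma>"
  have j: "j < m" using f prof unfolding is_binomial_rule_def j_def by blast
  define k where "k = (\<lambda>i. rank_pos m (\<sigma> i) j)"
  define p where "p = measure D {t<..}"
  define AA where "AA = (\<lambda>i. {A \<in> Pow {..<m}. Suc (k i) \<le> card A})"
  define g where "g = (\<lambda>\<omega>. t / real n * (\<Sum>i<n. \<Sum>A\<in>AA i. indicator (Fev D n m t i A) \<omega> :: real))"
  have spD: "space D = UNIV" using sets_eq_imp_space_eq[OF D(2)] by simp
  have p1: "p = 1 - measure D {..t}"
  proof -
    have "measure D (space D - {..t}) = 1 - measure D {..t}"
      using D(2) by (intro D.prob_compl) auto
    moreover have "space D - {..t} = {t<..}" using spD by auto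
    ultimately show ?thesis unfolding p_def by simp
  qed
  have ph: "1/2 \<le> p" "p \<le> 1" using p1 t measure_nonneg[of D "{..t}"] by auto
  have intI: "integrable (sample_space D n m) (\<lambda>\<omega>. \<Sum>A\<in>AA i. indicator (Fev D n m t i A) \<omega> :: real)"
    if "i < n" for i
    using Fev_sets[OF that D(2)] by (intro Bochner_Integration.integrable_sum integrable_real_indicator) (auto simp: S.emeasure_eq_measure)
  have intg: "integrable (sample_space D n m) g"
  proof -
    have "integrable (sample_space D n m) (\<lambda>\<omega>. \<Sum>i<n. \<Sum>A\<in>AA i. indicator (Fev D n m t i A) \<omega> :: real)"
      by (rule Bochner_Integration.integrable_sum) (use intI in auto)
    thus ?thesis unfolding g_def by (rule integrable_mult_right)
  qed
  have intd: "integrable (sample_space D n m) (\<lambda>\<omega>. distortion n m \<sigma> \<omega> j)"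
  proof -
    have ae: "AE \<omega> in sample_space D n m. norm (distortion n m \<sigma> \<omega> j) \<le> 1"
      using AE_vals[OF D] by eventually_elim (use dist_bounds[OF _ prof j] in auto)
    show ?thesis by (rule S.integrable_const_bound[where B=1]) (use ae dist_meas[OF D(2) prof j] in auto)
  qed
  have ae: "AE \<omega> in sample_space D n m. g \<omega> \<le> distortion n m \<sigma> \<omega> j"
    using AE_vals[OF D] AE_space
  proof eventually_elim
    case (elim \<omega>)
    have "g \<omega> = t / real n * (\<Sum>i<n. (if Suc (rank_pos m (\<sigma> i) j) \<le> card {l. l < m \<and> t < \<omega> (i,l)} then 1 else 0))"
      unfolding g_def AA_def k_def using Fev_indicator_sum[OF elim(2)] by simp
    also have "\<dots> \<le> distortion n m \<sigma> \<omega> j" by (rule pointwise[OF elim(1) prof j t(1) n])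
    finally show ?case .
  qed
  have "integral\<^sup>L (sample_space D n m) g = t / real n * (\<Sum>i<n. Hs p {..<m} (Suc (k i)))"
  proof -
    have "integral\<^sup>L (sample_space D n m) g = t / real n * (\<Sum>i<n. \<integral>\<omega>. (\<Sum>A\<in>AA i. indicator (Fev D n m t i A) \<omega> :: real) \<partial>sample_space D n m)"
      unfolding g_def integral_mult_right_zero
      by (subst Bochner_Integration.integral_sum) (use intI in auto)
    also have "\<dots> = t / real n * (\<Sum>i<n. Hs p {..<m} (Suc (k i)))"
    proof (intro arg_cong[where f="\<lambda>x. t / real n * x"] sum.cong refl)
      fix i assume "i \<in> {..<n}"
      hence i: "i < n" by simp
      show "(\<integral>\<omega>. (\<Sum>A\<in>AA i. indicator (Fev D n m t i A) \<omega> :: real) \<partial>sample_space D n m) = Hs p {..<m} (Suc (k i))"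
        unfolding AA_def p_def by (rule Fev_integral[OF D(1,2) i])
    qed
    finally show ?thesis .
  qed
  also have "\<dots> \<ge> t / real n * (\<Sum>i<n. real (binom_points m (k i)) / 2 ^ m)"
  proof (intro mult_left_mono sum_mono)
    fix i assume "i \<in> {..<n}"
    have "real (binom_points m (k i)) / 2 ^ m = Hs (1/2) {..<m} (Suc (k i))"
      by (simp add: Hs_half binom_points_card)
    also have "\<dots> \<le> Hs p {..<m} (Suc (k i))" using ph by (intro Hs_dom) auto
    finally show "real (binom_points m (k i)) / 2 ^ m \<le> Hs p {..<m} (Suc (k i))" .
  qed (use t in auto)
  also have "t / real n * (\<Sum>i<n. real (binom_points m (k i)) / 2 ^ m) = t / real n * real (binom_score n m \<sigma> j) / 2 ^ m"
    unfolding binom_score_def k_def by (simp add: sum_divide_distrib[symmetric])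
  also have "\<dots> \<ge> t / real n * real (n * 2 ^ (m - 1)) / 2 ^ m"
  proof -
    have "real (n * 2 ^ (m - 1)) \<le> real (binom_score n m \<sigma> j)"
      using score_lower[OF f prof m] unfolding j_def by (simp only: of_nat_le_iff)
    thus ?thesis using t n by (intro divide_right_mono mult_left_mono) auto
  qed
  also have "t / real n * real (n * 2 ^ (m - 1)) / 2 ^ m = t / 2"
  proof -
    have "(2::real) ^ m = 2 * 2 ^ (m - 1)" using m by (cases m) auto
    thus ?thesis using n by (simp add: field_simps)
  qed
  finally have "t / 2 \<le> integral\<^sup>L (sample_space D n m) g" .
  also have "\<dots> \<le> expected_dist D n m \<sigma> (f \<sigma>)"
    unfolding expected_dist_def j_def[symmetric]
    by (rule integral_mono_AE[OF intg intd ae])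
  finally show ?thesis .
qed



lemma key:
  assumes D: "prob_space D" "sets D = sets borel" "measure D {0..1} = 1"
    and eps: "\<epsilon> > 0" and n: "1 \<le> n" and m: "1 \<le> m" and f: "is_binomial_rule n m f"
  shows "edm_rule D n m ((1/2 - \<epsilon>) * largest_median D) f"
  unfolding edm_rule_def
proof (intro allI impI)
  fix \<sigma> assume prof: "is_profile n m \<sigma>"
  interpret D: prob_space D by (rule D(1))
  define S where "S = {y. measure D {..y} \<le> 1/2}"
  define \<nu> where "\<nu> = largest_median D"
  have nu: "\<nu> = Sup S" unfolding \<nu>_def S_def largest_median_def ..
  have spD: "space D = UNIV" using sets_eq_imp_space_eq[OF D(2)] by simp
  have c01: "measure D (UNIV - {0..1}) = 0"
  proof -
    have "measure D (space D - {0..1}) = 1 - measure D {0..1}"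
      using D(2) by (intro D.prob_compl) auto
    thus ?thesis using spD D(3) by simp
  qed
  have neg: "y \<in> S" if "y < 0" for y
  proof -
    have "measure D {..y} \<le> measure D (UNIV - {0..1})"
      using that D(2) by (intro D.finite_measure_mono) auto
    thus ?thesis using c01 unfolding S_def by simp
  qed
  have le1: "y \<le> 1" if "y \<in> S" for y
  proof (rule ccontr)
    assume "\<not> y \<le> 1"
    hence "measure D {0..1} \<le> measure D {..y}"
      using D(2) by (intro D.finite_measure_mono) auto
    thus False using that D(3) unfolding S_def by simp
  qed
  have ne: "S \<noteq> {}" using neg[of "-1"] by auto
  have bdd: "bdd_above S" using le1 by (intro bdd_aboveI) auto
  have nu0: "0 \<le> \<nu>"
  proof (rule ccontr)
    assume "\<not> 0 \<le> \<nu>"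
    hence "\<nu> / 2 \<in> S" by (intro neg) simp
    hence "\<nu> / 2 \<le> \<nu>" unfolding nu using bdd by (rule cSup_upper)
    thus False using \<open>\<not> 0 \<le> \<nu>\<close> by simp
  qed
  define E where "E = expected_dist D n m \<sigma>"
  define Mx where "Mx = Max (E ` {..<m})"
  have fm: "f \<sigma> < m" using f prof unfolding is_binomial_rule_def by blast
  have Eb: "\<And>j. j < m \<Longrightarrow> 0 \<le> E j \<and> E j \<le> 1" unfolding E_def by (rule ed_bounds[OF D prof])
  have nem: "{..<m} \<noteq> {}" using m by (metis lessThan_iff less_le_trans ex_in_conv zero_less_one)
  have Mx1: "Mx \<le> 1" unfolding Mx_def using Eb nem by (subst Max_le_iff) auto
  have Mx0: "E (f \<sigma>) \<le> Mx" unfolding Mx_def using fm by (intro Max_ge) auto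
  have E0: "0 \<le> E (f \<sigma>)" using Eb fm by blast
  show "(1/2 - \<epsilon>) * largest_median D * Max (expected_dist D n m \<sigma> ` {..<m}) \<le> expected_dist D n m \<sigma> (f \<sigma>)"
    unfolding \<nu>_def[symmetric] E_def[symmetric] Mx_def[symmetric]
  proof (cases "\<nu> = 0")
    case True then show "(1/2 - \<epsilon>) * \<nu> * Mx \<le> E (f \<sigma>)" using E0 by simp
  next
    case False
    hence pos: "0 < \<nu>" using nu0 by simp
    have "max 0 ((1 - 2 * \<epsilon>) * \<nu>) < \<nu>" using pos eps by (simp add: mult_less_cancel_right1)
    then obtain s where s: "s \<in> S" "max 0 ((1 - 2 * \<epsilon>) * \<nu>) < s"
      unfolding nu using less_cSup_iff[OF ne bdd] by blast
    have sb: "s / 2 \<le> E (f \<sigma>)" unfolding E_def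
      using s D n m f prof unfolding S_def by (intro main_bound) auto
    show "(1/2 - \<epsilon>) * \<nu> * Mx \<le> E (f \<sigma>)"
    proof (cases "1/2 - \<epsilon> \<le> 0")
      case True
      hence "(1/2 - \<epsilon>) * \<nu> * Mx \<le> 0"
        using pos E0 Mx0 by (intro mult_nonpos_nonneg) (auto intro: mult_nonpos_nonneg)
      thus ?thesis using E0 by linarith
    next
      case False
      have "(1/2 - \<epsilon>) * \<nu> * Mx \<le> (1/2 - \<epsilon>) * \<nu> * 1"
        using False pos Mx1 by (intro mult_left_mono) auto
      also have "\<dots> \<le> s / 2" using s by (simp add: algebra_simps)
      finally show ?thesis using sb by linarith
    qed
  qed
qed

theorem corollary1:
  fixes D :: "real measure"
  assumes "prob_space D"
    and "sets D = sets borel"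
    and "measure D {0..1} = 1"
  shows "(\<forall>\<epsilon>>0. \<exists>n0. \<forall>n\<ge>n0. \<forall>m\<ge>1. \<forall>f. is_binomial_rule n m f \<longrightarrow>
             edm_rule D n m ((1/2 - \<epsilon>) * largest_median D) f)
       \<and> ((continuous_on UNIV (cdf_of D)
            \<and> (\<forall>x\<in>{0<..<1}. cdf_of D differentiable at x)
            \<and> continuous_on {0<..<1} (deriv (cdf_of D))
            \<and> (INF x\<in>{0<..<1}. deriv (cdf_of D) x) > 0)
          \<longrightarrow> (\<forall>\<epsilon>>0. \<exists>m0. \<forall>m\<ge>m0. \<forall>n\<ge>1. \<forall>f. is_binomial_rule n m f \<longrightarrow>
             edm_rule D n m ((1/2 - \<epsilon>) * largest_median D) f))"
proof (intro conjI impI allI)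
  fix \<epsilon> :: real assume "\<epsilon> > 0"
  thus "\<exists>n0. \<forall>n\<ge>n0. \<forall>m\<ge>1. \<forall>f. is_binomial_rule n m f \<longrightarrow>
             edm_rule D n m ((1/2 - \<epsilon>) * largest_median D) f"
    using key[OF assms] by (intro exI[of _ 1]) auto
next
  fix \<epsilon> :: real assume "\<epsilon> > 0"
  thus "\<exists>m0. \<forall>m\<ge>m0. \<forall>n\<ge>1. \<forall>f. is_binomial_rule n m f \<longrightarrow>
             edm_rule D n m ((1/2 - \<epsilon>) * largest_median D) f"
    using key[OF assms] by (intro exI[of _ 1]) auto
qed

end
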